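(* Let $Y$ be a topological semigroup and $X$ a subsemigroup of $Y$ (with the subspace topology). Suppose there is a continuous homomorphism $h:X\to E$ into a chain-finite semilattice $E$ endowed with the discrete topology such that for every $e\in E$ the set $h^{-1}(e)$ is closed in $Y$. Then $X$ is closed in $Y$.
   Context: A topological semigroup is a topological space with a continuous associative binary operation (no separation axioms assumed here). A semilattice is a commutative semigroup of idempotents. A subset $C$ of a semigroup is a chain if $xy\in\{x,y\}$ for all $x,y\in C$; a semigroup is chain-finite if it has no infinite chain. *)

theory Defs
  imports "HOL-Analysis.Analysis"
begin

definition topological_semigroup :: "'a topology \<Rightarrow> ('a \<Rightarrow> 'a \<Rightarrow> 'a) \<Rightarrow> bool" where
  "topological_semigroup T m \<longleftrightarrow>
     (\<forall>x\<in>topspace T. \<forall>y\<in>topspace T. m x y \<in> topspace T) \<and>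
     (\<forall>x\<in>topspace T. \<forall>y\<in>topspace T. \<forall>z\<in>topspace T. m (m x y) z = m x (m y z)) \<and>
     continuous_map (prod_topology T T) T (\<lambda>(x, y). m x y)"

definition subsemigroup :: "'a set \<Rightarrow> 'a set \<Rightarrow> ('a \<Rightarrow> 'a \<Rightarrow> 'a) \<Rightarrow> bool" where
  "subsemigroup X S m \<longleftrightarrow> X \<subseteq> S \<and> (\<forall>x\<in>X. \<forall>y\<in>X. m x y \<in> X)"

definition semilattice_on :: "'b set \<Rightarrow> ('b \<Rightarrow> 'b \<Rightarrow> 'b) \<Rightarrow> bool" where
  "semilattice_on E p \<longleftrightarrow>
     (\<forall>x\<in>E. \<forall>y\<in>E. p x y \<in> E) \<and>
     (\<forall>x\<in>E. \<forall>y\<in>E. \<forall>z\<in>E. p (p x y) z = p x (p y z)) \<and>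
     (\<forall>x\<in>E. \<forall>y\<in>E. p x y = p y x) \<and>
     (\<forall>x\<in>E. p x x = x)"

definition is_chain :: "('b \<Rightarrow> 'b \<Rightarrow> 'b) \<Rightarrow> 'b set \<Rightarrow> bool" where
  "is_chain p C \<longleftrightarrow> (\<forall>x\<in>C. \<forall>y\<in>C. p x y \<in> {x, y})"

definition chain_finite :: "'b set \<Rightarrow> ('b \<Rightarrow> 'b \<Rightarrow> 'b) \<Rightarrow> bool" where
  "chain_finite E p \<longleftrightarrow> (\<forall>C. C \<subseteq> E \<and> is_chain p C \<longrightarrow> finite C)"

definition semigroup_hom :: "('a \<Rightarrow> 'b) \<Rightarrow> 'a set \<Rightarrow> ('a \<Rightarrow> 'a \<Rightarrow> 'a) \<Rightarrow> 'b set \<Rightarrow> ('b \<Rightarrow> 'b \<Rightarrow> 'b) \<Rightarrow> bool" where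
  "semigroup_hom h X m E p \<longleftrightarrow> h ` X \<subseteq> E \<and> (\<forall>x\<in>X. \<forall>y\<in>X. h (m x y) = p (h x) (h y))"

end

theory Submission
  imports Defs
begin

lemma mult_cont:
  assumes "topological_semigroup T m" "u \<in> topspace T" "v \<in> topspace T" "openin T N" "m u v \<in> N"
  shows "\<exists>U V. openin T U \<and> openin T V \<and> u \<in> U \<and> v \<in> V \<and> (\<forall>x\<in>U. \<forall>z\<in>V. m x z \<in> N)"
proof -
  have c: "continuous_map (prod_topology T T) T (\<lambda>(x,y). m x y)"
    using assms(1) by (simp add: topological_semigroup_def)
  have o: "openin (prod_topology T T) {z \<in> topspace (prod_topology T T). (\<lambda>(x,y). m x y) z \<in> N}"
    using openin_continuous_map_preimage[OF c assms(4)] .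
  have uv: "(u,v) \<in> {z \<in> topspace (prod_topology T T). (\<lambda>(x,y). m x y) z \<in> N}"
    using assms by simp
  obtain U V where UV: "openin T U" "openin T V" "u \<in> U" "v \<in> V"
     "U \<times> V \<subseteq> {z \<in> topspace (prod_topology T T). (\<lambda>(x,y). m x y) z \<in> N}"
    using openin_prod_topology_alt[THEN iffD1, OF o, rule_format, OF uv] by blast
  have "\<forall>x\<in>U. \<forall>z\<in>V. m x z \<in> N"
  proof (intro ballI)
    fix x z assume "x \<in> U" "z \<in> V"
    then have "(x, z) \<in> U \<times> V" by simp
    then show "m x z \<in> N" using UV(5) by auto
  qed
  then show ?thesis using UV(1-4) by blast
qed

lemma chain_finite_no_seq:
  fixes f :: "nat \<Rightarrow> 'b"
  assumes cf: "chain_finite E p" and sl: "semilattice_on E p"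
    and f: "\<And>i j. i < j \<Longrightarrow> f i \<noteq> f j \<and> (p (f i) (f j) = f i \<or> p (f i) (f j) = f j)"
    and fE: "range f \<subseteq> E"
  shows False
proof -
  have comm: "\<And>x y. x \<in> E \<Longrightarrow> y \<in> E \<Longrightarrow> p x y = p y x" and idem: "\<And>x. x \<in> E \<Longrightarrow> p x x = x"
    using sl by (auto simp: semilattice_on_def)
  have inj: "inj f"
  proof (rule injI)
    fix i j assume "f i = f j"
    show "i = j"
    proof (rule ccontr)
      assume "i \<noteq> j"
      then have "i < j \<or> j < i" by arith
      then show False using f[of i j] f[of j i] \<open>f i = f j\<close> by auto
    qed
  qed
  have ch: "is_chain p (range f)"
    unfolding is_chain_def
  proof (intro ballI)
    fix x y assume "x \<in> range f" "y \<in> range f"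
    then obtain i j where ij: "x = f i" "y = f j" by auto
    have "i < j \<or> i = j \<or> j < i" by arith
    then show "p x y \<in> {x, y}"
    proof (elim disjE)
      assume "i < j" then show ?thesis using f ij by auto
    next
      assume "i = j" then show ?thesis using ij idem fE by auto
    next
      assume "j < i"
      have "p (f i) (f j) = p (f j) (f i)" using comm[of "f i" "f j"] fE by (metis range_subsetD)
      then show ?thesis using f[of j i] \<open>j < i\<close> ij by auto
    qed
  qed
  have "finite (range f)" using cf ch fE unfolding chain_finite_def by blast
  with range_inj_infinite[OF inj] show False by simp
qed

theorem lemma4p1:
  fixes T :: "'a topology" and m :: "'a \<Rightarrow> 'a \<Rightarrow> 'a"
    and X :: "'a set" and E :: "'b set" and p :: "'b \<Rightarrow> 'b \<Rightarrow> 'b" and h :: "'a \<Rightarrow> 'b"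
  assumes "topological_semigroup T m"
    and "subsemigroup X (topspace T) m"
    and "semilattice_on E p"
    and "chain_finite E p"
    and "semigroup_hom h X m E p"
    and "continuous_map (subtopology T X) (discrete_topology E) h"
    and "\<forall>e\<in>E. closedin T {x \<in> X. h x = e}"
  shows "closedin T X"
proof -
  note TS = assms(1)
  have XT: "X \<subseteq> topspace T" and Xm: "\<And>x y. x \<in> X \<Longrightarrow> y \<in> X \<Longrightarrow> m x y \<in> X"
    using assms(2) by (auto simp: subsemigroup_def)
  have mT: "\<And>x y. x \<in> topspace T \<Longrightarrow> y \<in> topspace T \<Longrightarrow> m x y \<in> topspace T"
    using TS by (auto simp: topological_semigroup_def)
  have hE: "\<And>x. x \<in> X \<Longrightarrow> h x \<in> E" and hm: "\<And>x y. x \<in> X \<Longrightarrow> y \<in> X \<Longrightarrow> h (m x y) = p (h x) (h y)"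
    using assms(5) by (auto simp: semigroup_hom_def)
  have pE: "\<And>x y. x \<in> E \<Longrightarrow> y \<in> E \<Longrightarrow> p x y \<in> E"
    and assoc: "\<And>x y z. x \<in> E \<Longrightarrow> y \<in> E \<Longrightarrow> z \<in> E \<Longrightarrow> p (p x y) z = p x (p y z)"
    and comm: "\<And>x y. x \<in> E \<Longrightarrow> y \<in> E \<Longrightarrow> p x y = p y x"
    and idem: "\<And>x. x \<in> E \<Longrightarrow> p x x = x"
    using assms(3) by (auto simp: semilattice_on_def)
  have hcl: "\<And>e. e \<in> E \<Longrightarrow> T closure_of {x \<in> X. h x = e} = {x \<in> X. h x = e}"
    using assms(7) by (simp add: closure_of_eq)
  have hopen: "\<exists>Ob. openin T Ob \<and> w \<in> Ob \<and> (\<forall>x\<in>Ob \<inter> X. h x = h w)" if w: "w \<in> X" for w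
  proof -
    have "openin (discrete_topology E) {h w}" using hE[OF w] by simp
    from openin_continuous_map_preimage[OF assms(6) this]
    have "openin (subtopology T X) {x \<in> topspace T \<inter> X. h x \<in> {h w}}" by simp
    then obtain Ob where "openin T Ob" "{x \<in> topspace T \<inter> X. h x \<in> {h w}} = Ob \<inter> X"
      unfolding openin_subtopology by blast
    then show ?thesis using w XT by blast
  qed
  define less where "less = {(a,b). a \<in> E \<and> b \<in> E \<and> p a b = a \<and> a \<noteq> b}"
  have less_trans: "(a,c) \<in> less" if "(a,b) \<in> less" "(b,c) \<in> less" for a b c
  proof -
    have E3: "a \<in> E" "b \<in> E" "c \<in> E" and ab: "p a b = a" "a \<noteq> b" and bc: "p b c = b" "b \<noteq> c"
      using that by (auto simp: less_def)
    have "p a c = a" using assoc[OF E3(1,2,3)] ab bc by simp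
    moreover have "a \<noteq> c" using ab bc comm[OF E3(1,2)] by auto
    ultimately show ?thesis using E3 by (auto simp: less_def)
  qed
  have wfless: "wf less"
    unfolding wf_iff_no_infinite_down_chain
  proof
    assume "\<exists>f. \<forall>i. (f (Suc i), f i) \<in> less"
    then obtain f where f: "\<And>i. (f (Suc i), f i) \<in> less" by blast
    have k: "(f (i + Suc k), f i) \<in> less" for i k
    proof (induction k)
      case 0 then show ?case using f by simp
    next
      case (Suc k) then show ?case using f[of "i + Suc k"] less_trans by simp
    qed
    have ij: "(f j, f i) \<in> less" if "i < j" for i j
      using k[of i "j - i - 1"] that by simp
    have fE: "range f \<subseteq> E" using f by (auto simp: less_def)
    show False
    proof (rule chain_finite_no_seq[OF assms(4,3) _ fE])
      fix i j :: nat assume "i < j"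
      then have "(f j, f i) \<in> less" by (rule ij)
      then have l: "f j \<in> E" "f i \<in> E" "p (f j) (f i) = f j" "f j \<noteq> f i" by (auto simp: less_def)
      have "p (f i) (f j) = f j" using comm[OF l(2) l(1)] l(3) by (rule trans)
      then show "f i \<noteq> f j \<and> (p (f i) (f j) = f i \<or> p (f i) (f j) = f j)"
        using l(4) by simp
    qed
  qed
  have wfless2: "wf (less\<inverse>)"
    unfolding wf_iff_no_infinite_down_chain
  proof
    assume "\<exists>f. \<forall>i. (f (Suc i), f i) \<in> less\<inverse>"
    then obtain f where f: "\<And>i. (f i, f (Suc i)) \<in> less" by auto
    have k: "(f i, f (i + Suc k)) \<in> less" for i k
    proof (induction k)
      case 0 then show ?case using f by simp
    next
      case (Suc k) then show ?case using f[of "i + Suc k"] less_trans by simp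
    qed
    have ij: "(f i, f j) \<in> less" if "i < j" for i j
      using k[of i "j - i - 1"] that by simp
    have fE: "range f \<subseteq> E" using f by (auto simp: less_def)
    show False
    proof (rule chain_finite_no_seq[OF assms(4,3) _ fE])
      fix i j :: nat assume "i < j"
      then have "(f i, f j) \<in> less" by (rule ij)
      then show "f i \<noteq> f j \<and> (p (f i) (f j) = f i \<or> p (f i) (f j) = f j)"
        by (auto simp: less_def)
    qed
  qed
  have "T closure_of X \<subseteq> X"
  proof
    fix y assume yX: "y \<in> T closure_of X"
    have yT: "y \<in> topspace T" using yX in_closure_of by fast
    have "X \<noteq> {}" using yX by auto
    then obtain x0 where x0: "x0 \<in> X" by auto
    obtain m0 where m0: "m0 \<in> h ` X" and m0min: "\<And>z. (z, m0) \<in> less \<Longrightarrow> z \<notin> h ` X"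
      using wfless[unfolded wf_eq_minimal, rule_format, of "h x0" "h ` X"] x0 by blast
    have m0le: "p m0 (h x) = m0" if "x \<in> X" for x
    proof (rule ccontr)
      assume ne: "p m0 (h x) \<noteq> m0"
      obtain a where a: "a \<in> X" "m0 = h a" using m0 by auto
      have E2: "m0 \<in> E" "h x \<in> E" using a hE that by auto
      have "p m0 (h x) \<in> h ` X" using a that hm[of a x] Xm[of a x] by (metis image_eqI)
      moreover have "(p m0 (h x), m0) \<in> less"
      proof -
        have "p (p m0 (h x)) m0 = p m0 (p (h x) m0)" by (rule assoc[OF E2(1) E2(2) E2(1)])
        also have "\<dots> = p m0 (p m0 (h x))" by (subst comm[OF E2(2) E2(1)]) (rule refl)
        also have "\<dots> = p (p m0 m0) (h x)" using assoc[OF E2(1) E2(1) E2(2)] by simp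
        also have "\<dots> = p m0 (h x)" using idem[OF E2(1)] by simp
        finally show ?thesis using ne E2 pE[OF E2] unfolding less_def by auto
      qed
      ultimately show False using m0min by blast
    qed
    define D where "D = {f \<in> E. y \<in> T closure_of {x \<in> X. p f (h x) = f}}"
    have "{x \<in> X. p m0 (h x) = m0} = X" using m0le by auto
    moreover have "m0 \<in> E" using m0 hE by auto
    ultimately have "m0 \<in> D" using yX unfolding D_def by simp
    then obtain e where eD: "e \<in> D" and emax: "\<And>f. (e, f) \<in> less \<Longrightarrow> f \<notin> D"
      using wfless2[unfolded wf_eq_minimal, rule_format, of m0 D] by blast
    have eE: "e \<in> E" using eD by (simp add: D_def)
    define Xe where "Xe = {x \<in> X. p e (h x) = e}"
    have yXe: "y \<in> T closure_of Xe" using eD by (simp add: D_def Xe_def)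
    have getXe: "\<exists>x. x \<in> Xe \<and> x \<in> W" if "openin T W" "y \<in> W" for W
      using yXe that unfolding in_closure_of by blast
    have getX: "\<exists>x. x \<in> X \<and> x \<in> W" if "openin T W" "y \<in> W" for W
      using yX that unfolding in_closure_of by blast
    define Good where "Good b \<longleftrightarrow> (\<exists>W. openin T W \<and> y \<in> W \<and> (\<forall>x\<in>W \<inter> Xe. p (h x) b = e))" for b
    have G: "\<forall>b. b \<in> h ` X \<longrightarrow> p e b = e \<longrightarrow> Good b"
    proof (rule allI, rule wf_induct[OF wfless])
      fix b assume IH: "\<forall>b'. (b', b) \<in> less \<longrightarrow> (b' \<in> h ` X \<longrightarrow> p e b' = e \<longrightarrow> Good b')"
      show "b \<in> h ` X \<longrightarrow> p e b = e \<longrightarrow> Good b"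
      proof (intro impI)
        assume bX: "b \<in> h ` X" and eb: "p e b = e"
        obtain a where a: "a \<in> X" "h a = b" using bX by auto
        have bE: "b \<in> E" using a hE by auto
        show "Good b"
        proof (cases "b = e")
          case True
          have "\<forall>x\<in>topspace T \<inter> Xe. p (h x) b = e"
          proof
            fix x assume "x \<in> topspace T \<inter> Xe"
            then have xX: "x \<in> X" "p e (h x) = e" by (auto simp: Xe_def)
            have "p (h x) e = e" using comm[OF hE[OF xX(1)] eE] xX(2) by (rule trans)
            then show "p (h x) b = e" using True by simp
          qed
          then show ?thesis unfolding Good_def using yT by blast
        next
          case False
          have "(e, b) \<in> less" using False eE bE eb by (auto simp: less_def)
          then have "b \<notin> D" by (rule emax)
          then have "y \<notin> T closure_of {x \<in> X. p b (h x) = b}" using bE by (simp add: D_def)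
          then obtain W1 where W1: "openin T W1" "y \<in> W1" and W1n: "\<And>x. x \<in> X \<Longrightarrow> p b (h x) = b \<Longrightarrow> x \<notin> W1"
            using yT unfolding in_closure_of by blast
          have aT: "a \<in> topspace T" using a XT by auto
          have yyT: "m y y \<in> topspace T" using yT mT by auto
          have step: "p (h x) b \<in> h ` X \<and> p e (p (h x) b) = e \<and> (p (h x) b, b) \<in> less"
            if x: "x \<in> Xe" "x \<in> W1" for x
          proof -
            have xX: "x \<in> X" and ex: "p e (h x) = e" using x by (auto simp: Xe_def)
            have hxE: "h x \<in> E" using hE xX by auto
            have 1: "p (h x) b \<in> h ` X" using hm[OF xX a(1)] Xm[OF xX a(1)] a by force
            have 2: "p e (p (h x) b) = e" using assoc[OF eE hxE bE] ex eb by simp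
            have "p (p (h x) b) b = p (h x) b" using assoc[OF hxE bE bE] idem[OF bE] by simp
            moreover have "p (h x) b \<noteq> b"
            proof
              assume "p (h x) b = b"
              then have "p b (h x) = b" by (rule trans[OF comm[OF bE hxE]])
              then show False using W1n[OF xX] x(2) by blast
            qed
            ultimately have 3: "(p (h x) b, b) \<in> less" using pE hxE bE by (auto simp: less_def)
            show ?thesis using 1 2 3 by blast
          qed
          have wcl: "m (m y y) a \<in> T closure_of {x \<in> X. h x = e}"
            unfolding in_closure_of
          proof (intro conjI allI impI)
            show "m (m y y) a \<in> topspace T" using yyT aT mT by auto
            fix N assume N: "m (m y y) a \<in> N \<and> openin T N"
            obtain U V where UV: "openin T U" "openin T V" "m y y \<in> U" "a \<in> V" "\<forall>x\<in>U. \<forall>z\<in>V. m x z \<in> N"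
              using mult_cont[OF TS yyT aT, of N] N by blast
            obtain W2 W3 where W23: "openin T W2" "openin T W3" "y \<in> W2" "y \<in> W3" "\<forall>x\<in>W2. \<forall>z\<in>W3. m x z \<in> U"
              using mult_cont[OF TS yT yT, of U] UV by blast
            obtain x where x: "x \<in> Xe" "x \<in> W1 \<inter> W2 \<inter> W3"
              using getXe[of "W1 \<inter> W2 \<inter> W3"] W1 W23 by auto
            have st: "p (h x) b \<in> h ` X \<and> p e (p (h x) b) = e \<and> (p (h x) b, b) \<in> less"
              using step x by auto
            then have "Good (p (h x) b)" using IH by blast
            then obtain Wx where Wx: "openin T Wx" "y \<in> Wx" "\<forall>x'\<in>Wx \<inter> Xe. p (h x') (p (h x) b) = e"
              unfolding Good_def by blast
            obtain x' where x': "x' \<in> Xe" "x' \<in> W1 \<inter> W2 \<inter> W3 \<inter> Wx"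
              using getXe[of "W1 \<inter> W2 \<inter> W3 \<inter> Wx"] W1 W23 Wx by auto
            have xX: "x \<in> X" "x' \<in> X" using x x' by (auto simp: Xe_def)
            have "m (m x' x) a \<in> N" using UV W23 x x' by auto
            moreover have "m (m x' x) a \<in> X" using Xm xX a by auto
            moreover have "h (m (m x' x) a) = e"
            proof -
              have "h (m (m x' x) a) = p (p (h x') (h x)) b"
                using hm[OF Xm[OF xX(2) xX(1)] a(1)] hm[OF xX(2) xX(1)] a(2) by simp
              also have "\<dots> = p (h x') (p (h x) b)" using assoc[OF hE[OF xX(2)] hE[OF xX(1)] bE] .
              also have "\<dots> = e" using Wx(3) x' by blast
              finally show ?thesis .
            qed
            ultimately show "\<exists>z. z \<in> {x \<in> X. h x = e} \<and> z \<in> N" by blast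
          qed
          then have wX: "m (m y y) a \<in> X" "h (m (m y y) a) = e" using hcl[OF eE] by auto
          obtain Ob where Ob: "openin T Ob" "m (m y y) a \<in> Ob" "\<forall>x\<in>Ob \<inter> X. h x = e"
            using hopen[OF wX(1)] wX(2) by auto
          obtain U V where UV: "openin T U" "openin T V" "m y y \<in> U" "a \<in> V" "\<forall>x\<in>U. \<forall>z\<in>V. m x z \<in> Ob"
            using mult_cont[OF TS yyT aT, of Ob] Ob by blast
          obtain W4 W5 where W45: "openin T W4" "openin T W5" "y \<in> W4" "y \<in> W5" "\<forall>x\<in>W4. \<forall>z\<in>W5. m x z \<in> U"
            using mult_cont[OF TS yT yT, of U] UV by blast
          show ?thesis unfolding Good_def
          proof (intro exI[of _ "W4 \<inter> W5"] conjI ballI)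
            show "openin T (W4 \<inter> W5)" using W45 by auto
            show "y \<in> W4 \<inter> W5" using W45 by auto
            fix x assume x: "x \<in> W4 \<inter> W5 \<inter> Xe"
            then have xX: "x \<in> X" by (auto simp: Xe_def)
            have "m (m x x) a \<in> Ob" using UV W45 x by auto
            moreover have "m (m x x) a \<in> X" using Xm xX a by auto
            ultimately have "h (m (m x x) a) = e" using Ob by auto
            moreover have "h (m (m x x) a) = p (h x) b"
              using hm[OF Xm[OF xX xX] a(1)] hm[OF xX xX] idem[OF hE[OF xX]] a(2) by simp
            ultimately show "p (h x) b = e" by simp
          qed
        qed
      qed
    qed
    have yyT: "m y y \<in> topspace T" using yT mT by auto
    have "m y y \<in> T closure_of {x \<in> X. h x = e}"
      unfolding in_closure_of
    proof (intro conjI allI impI)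
      show "m y y \<in> topspace T" by (rule yyT)
      fix N assume N: "m y y \<in> N \<and> openin T N"
      obtain W1 W2 where W12: "openin T W1" "openin T W2" "y \<in> W1" "y \<in> W2" "\<forall>x\<in>W1. \<forall>z\<in>W2. m x z \<in> N"
        using mult_cont[OF TS yT yT, of N] N by blast
      obtain x where x: "x \<in> Xe" "x \<in> W1 \<inter> W2"
        using getXe[of "W1 \<inter> W2"] W12 by auto
      have "Good (h x)" using G x by (auto simp: Xe_def)
      then obtain Wx where Wx: "openin T Wx" "y \<in> Wx" "\<forall>x'\<in>Wx \<inter> Xe. p (h x') (h x) = e"
        unfolding Good_def by blast
      obtain x' where x': "x' \<in> Xe" "x' \<in> W1 \<inter> W2 \<inter> Wx"
        using getXe[of "W1 \<inter> W2 \<inter> Wx"] W12 Wx by auto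
      have xX: "x \<in> X" "x' \<in> X" using x x' by (auto simp: Xe_def)
      have "m x' x \<in> N" using W12 x x' by auto
      moreover have "m x' x \<in> X" using Xm xX by auto
      moreover have "h (m x' x) = e" using hm xX Wx(3) x' by auto
      ultimately show "\<exists>z. z \<in> {x \<in> X. h x = e} \<and> z \<in> N" by blast
    qed
    then have yy: "m y y \<in> X" "h (m y y) = e" using hcl[OF eE] by auto
    obtain Ob where Ob: "openin T Ob" "m y y \<in> Ob" "\<forall>x\<in>Ob \<inter> X. h x = e"
      using hopen[OF yy(1)] yy(2) by auto
    obtain W1 W2 where W12: "openin T W1" "openin T W2" "y \<in> W1" "y \<in> W2" "\<forall>x\<in>W1. \<forall>z\<in>W2. m x z \<in> Ob"
      using mult_cont[OF TS yT yT, of Ob] Ob by blast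
    have "y \<in> T closure_of {x \<in> X. h x = e}"
      unfolding in_closure_of
    proof (intro conjI allI impI)
      show "y \<in> topspace T" by (rule yT)
      fix N assume N: "y \<in> N \<and> openin T N"
      have oN: "openin T (N \<inter> W1 \<inter> W2)" using N W12 by auto
      have yN: "y \<in> N \<inter> W1 \<inter> W2" using N W12 by auto
      obtain x where x: "x \<in> X" "x \<in> N \<inter> W1 \<inter> W2"
        using getX[OF oN yN] by blast
      have "m x x \<in> Ob" using W12 x by auto
      moreover have "m x x \<in> X" using Xm x by auto
      ultimately have "h (m x x) = e" using Ob by auto
      moreover have "h (m x x) = h x" using hm[OF x(1) x(1)] idem[OF hE[OF x(1)]] by simp
      ultimately have "h x = e" by simp
      then show "\<exists>z. z \<in> {x \<in> X. h x = e} \<and> z \<in> N" using x by blast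
    qed
    then show "y \<in> X" using hcl[OF eE] by auto
  qed
  then show ?thesis using XT by (simp add: closure_of_subset_eq[symmetric])
qed

end
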